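(* Fix $n\ge0$. On the class of tilting subcategories of $\mathcal C$ of projective dimension $n$, the relation $\mathcal T_1\le\mathcal T_2$ defined by $\mathcal T_1\subseteq\mathcal T_2^{\perp}$ is a partial order.
   Context: $(\mathcal C,\mathbb E,\mathfrak s)$ is an extriangulated category in the sense of Nakaoka–Palu, Krull–Schmidt, with enough projectives and enough injectives; subcategories are full, additive, closed under isomorphisms. Higher extensions: $\mathbb E^1=\mathbb E$, $\mathbb E^{i+1}(X,Y)=\mathbb E(\Omega^iX,Y)\cong\mathbb E(X,\Sigma^iY)$. $\mathrm{pd}(A)\le n$ iff $\mathbb E^{n+1}(A,-)=0$. $\mathcal S^{\perp}=\{Y:\mathbb E^i(S,Y)=0\ \forall i\ge1,\forall S\in\mathcal S\}$. A subcategory $\mathcal T$ closed under direct summands is a tilting subcategory of projective dimension $n$ if $\mathrm{pd}(T)\le n$ for all $T\in\mathcal T$ and $\mathcal T$ is a generator for $\mathcal T^{\perp}$, i.e. $\mathcal T\subseteq\mathcal T^{\perp}$ and every $Y\in\mathcal T^{\perp}$ admits an $\mathbb E$-triangle $Y'\to T\to Y\dashrightarrow$ with $T\in\mathcal T$, $Y'\in\mathcal T^{\perp}$. *)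

theory Defs
  imports Main
begin

section \<open>Extriangulated categories (Nakaoka--Palu), encoded concretely\<close>

text \<open>A (small-ish) category is given by a set of objects, a set of morphisms
with domain/codomain, composition (Cmp g f = g o f) and identities.  The bifunctor
E(C,A) is given by a set EE of extensions, each extension d lying in
E(EC d, EA d); EAdd/EZer/ENeg give the group structure, Push a d = a_* d,
Pull c d = c^* d.  Real d x y means that the sequence A -x-> B -y-> C belongs
to the equivalence class s(d).\<close>

record ('o,'m,'e) extri_data =
  Ob :: "'o set"
  Mor :: "'m set"
  Dom :: "'m \<Rightarrow> 'o"
  Cod :: "'m \<Rightarrow> 'o"
  Cmp :: "'m \<Rightarrow> 'm \<Rightarrow> 'm"
  Idm :: "'o \<Rightarrow> 'm"
  Add :: "'m \<Rightarrow> 'm \<Rightarrow> 'm"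
  Zer :: "'o \<Rightarrow> 'o \<Rightarrow> 'm"
  Neg :: "'m \<Rightarrow> 'm"
  EE :: "'e set"
  EA :: "'e \<Rightarrow> 'o"
  EC :: "'e \<Rightarrow> 'o"
  EAdd :: "'e \<Rightarrow> 'e \<Rightarrow> 'e"
  EZer :: "'o \<Rightarrow> 'o \<Rightarrow> 'e"
  ENeg :: "'e \<Rightarrow> 'e"
  Push :: "'m \<Rightarrow> 'e \<Rightarrow> 'e"
  Pull :: "'m \<Rightarrow> 'e \<Rightarrow> 'e"
  Real :: "'e \<Rightarrow> 'm \<Rightarrow> 'm \<Rightarrow> bool"

definition hom :: "('o,'m,'e) extri_data \<Rightarrow> 'o \<Rightarrow> 'o \<Rightarrow> 'm set" where
  "hom CC X Y = {f \<in> Mor CC. Dom CC f = X \<and> Cod CC f = Y}"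

definition ext :: "('o,'m,'e) extri_data \<Rightarrow> 'o \<Rightarrow> 'o \<Rightarrow> 'e set" where
  "ext CC C A = {d \<in> EE CC. EC CC d = C \<and> EA CC d = A}"

definition abgroup_on :: "'a set \<Rightarrow> ('a \<Rightarrow> 'a \<Rightarrow> 'a) \<Rightarrow> 'a \<Rightarrow> ('a \<Rightarrow> 'a) \<Rightarrow> bool" where
  "abgroup_on G add z neg \<longleftrightarrow>
     z \<in> G \<and> (\<forall>a\<in>G. \<forall>b\<in>G. add a b \<in> G) \<and> (\<forall>a\<in>G. neg a \<in> G) \<and>
     (\<forall>a\<in>G. \<forall>b\<in>G. \<forall>c\<in>G. add (add a b) c = add a (add b c)) \<and>
     (\<forall>a\<in>G. \<forall>b\<in>G. add a b = add b a) \<and>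
     (\<forall>a\<in>G. add z a = a) \<and> (\<forall>a\<in>G. add (neg a) a = z)"

definition is_category :: "('o,'m,'e) extri_data \<Rightarrow> bool" where
  "is_category CC \<longleftrightarrow>
     (\<forall>f\<in>Mor CC. Dom CC f \<in> Ob CC \<and> Cod CC f \<in> Ob CC) \<and>
     (\<forall>X\<in>Ob CC. Idm CC X \<in> hom CC X X) \<and>
     (\<forall>X Y Z f g. f \<in> hom CC X Y \<longrightarrow> g \<in> hom CC Y Z \<longrightarrow> Cmp CC g f \<in> hom CC X Z) \<and>
     (\<forall>X Y f. f \<in> hom CC X Y \<longrightarrow> Cmp CC (Idm CC Y) f = f \<and> Cmp CC f (Idm CC X) = f) \<and>
     (\<forall>W X Y Z f g h. f \<in> hom CC W X \<longrightarrow> g \<in> hom CC X Y \<longrightarrow> h \<in> hom CC Y Z \<longrightarrow>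
        Cmp CC h (Cmp CC g f) = Cmp CC (Cmp CC h g) f)"

definition preadditive :: "('o,'m,'e) extri_data \<Rightarrow> bool" where
  "preadditive CC \<longleftrightarrow> is_category CC \<and>
     (\<forall>X\<in>Ob CC. \<forall>Y\<in>Ob CC. abgroup_on (hom CC X Y) (Add CC) (Zer CC X Y) (Neg CC)) \<and>
     (\<forall>X Y Z f f' g. f \<in> hom CC X Y \<longrightarrow> f' \<in> hom CC X Y \<longrightarrow> g \<in> hom CC Y Z \<longrightarrow>
        Cmp CC g (Add CC f f') = Add CC (Cmp CC g f) (Cmp CC g f')) \<and>
     (\<forall>X Y Z f g g'. f \<in> hom CC X Y \<longrightarrow> g \<in> hom CC Y Z \<longrightarrow> g' \<in> hom CC Y Z \<longrightarrow>
        Cmp CC (Add CC g g') f = Add CC (Cmp CC g f) (Cmp CC g' f))"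

definition zero_object :: "('o,'m,'e) extri_data \<Rightarrow> 'o \<Rightarrow> bool" where
  "zero_object CC Z \<longleftrightarrow> Z \<in> Ob CC \<and>
     (\<forall>X\<in>Ob CC. (\<exists>!f. f \<in> hom CC Z X) \<and> (\<exists>!f. f \<in> hom CC X Z))"

definition biproduct :: "('o,'m,'e) extri_data \<Rightarrow> 'o \<Rightarrow> 'o \<Rightarrow> 'o \<Rightarrow> 'm \<Rightarrow> 'm \<Rightarrow> 'm \<Rightarrow> 'm \<Rightarrow> bool" where
  "biproduct CC X Y S i1 i2 p1 p2 \<longleftrightarrow> S \<in> Ob CC \<and>
     i1 \<in> hom CC X S \<and> i2 \<in> hom CC Y S \<and> p1 \<in> hom CC S X \<and> p2 \<in> hom CC S Y \<and>
     Cmp CC p1 i1 = Idm CC X \<and> Cmp CC p2 i2 = Idm CC Y \<and>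
     Cmp CC p1 i2 = Zer CC Y X \<and> Cmp CC p2 i1 = Zer CC X Y \<and>
     Add CC (Cmp CC i1 p1) (Cmp CC i2 p2) = Idm CC S"

definition additive :: "('o,'m,'e) extri_data \<Rightarrow> bool" where
  "additive CC \<longleftrightarrow> preadditive CC \<and> (\<exists>Z. zero_object CC Z) \<and>
     (\<forall>X\<in>Ob CC. \<forall>Y\<in>Ob CC. \<exists>S i1 i2 p1 p2. biproduct CC X Y S i1 i2 p1 p2)"

definition is_iso :: "('o,'m,'e) extri_data \<Rightarrow> 'o \<Rightarrow> 'o \<Rightarrow> 'm \<Rightarrow> bool" where
  "is_iso CC X Y f \<longleftrightarrow> f \<in> hom CC X Y \<and>
     (\<exists>g\<in>hom CC Y X. Cmp CC g f = Idm CC X \<and> Cmp CC f g = Idm CC Y)"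

definition ET1 :: "('o,'m,'e) extri_data \<Rightarrow> bool" where
  "ET1 CC \<longleftrightarrow>
     (\<forall>d\<in>EE CC. EA CC d \<in> Ob CC \<and> EC CC d \<in> Ob CC) \<and>
     (\<forall>C\<in>Ob CC. \<forall>A\<in>Ob CC. abgroup_on (ext CC C A) (EAdd CC) (EZer CC C A) (ENeg CC)) \<and>
     (\<forall>A A' C a d. a \<in> hom CC A A' \<longrightarrow> d \<in> ext CC C A \<longrightarrow> Push CC a d \<in> ext CC C A') \<and>
     (\<forall>A C C' c d. c \<in> hom CC C' C \<longrightarrow> d \<in> ext CC C A \<longrightarrow> Pull CC c d \<in> ext CC C' A) \<and>
     (\<forall>A C d. d \<in> ext CC C A \<longrightarrow> Push CC (Idm CC A) d = d \<and> Pull CC (Idm CC C) d = d) \<and>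
     (\<forall>A A' A'' C a a' d. a \<in> hom CC A A' \<longrightarrow> a' \<in> hom CC A' A'' \<longrightarrow> d \<in> ext CC C A \<longrightarrow>
        Push CC (Cmp CC a' a) d = Push CC a' (Push CC a d)) \<and>
     (\<forall>A C C' C'' c c' d. c \<in> hom CC C' C \<longrightarrow> c' \<in> hom CC C'' C' \<longrightarrow> d \<in> ext CC C A \<longrightarrow>
        Pull CC (Cmp CC c c') d = Pull CC c' (Pull CC c d)) \<and>
     (\<forall>A A' C C' a c d. a \<in> hom CC A A' \<longrightarrow> c \<in> hom CC C' C \<longrightarrow> d \<in> ext CC C A \<longrightarrow>
        Push CC a (Pull CC c d) = Pull CC c (Push CC a d)) \<and>
     (\<forall>A A' C a d d'. a \<in> hom CC A A' \<longrightarrow> d \<in> ext CC C A \<longrightarrow> d' \<in> ext CC C A \<longrightarrow>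
        Push CC a (EAdd CC d d') = EAdd CC (Push CC a d) (Push CC a d')) \<and>
     (\<forall>A A' C a a' d. a \<in> hom CC A A' \<longrightarrow> a' \<in> hom CC A A' \<longrightarrow> d \<in> ext CC C A \<longrightarrow>
        Push CC (Add CC a a') d = EAdd CC (Push CC a d) (Push CC a' d)) \<and>
     (\<forall>A C C' c d d'. c \<in> hom CC C' C \<longrightarrow> d \<in> ext CC C A \<longrightarrow> d' \<in> ext CC C A \<longrightarrow>
        Pull CC c (EAdd CC d d') = EAdd CC (Pull CC c d) (Pull CC c d')) \<and>
     (\<forall>A C C' c c' d. c \<in> hom CC C' C \<longrightarrow> c' \<in> hom CC C' C \<longrightarrow> d \<in> ext CC C A \<longrightarrow>
        Pull CC (Add CC c c') d = EAdd CC (Pull CC c d) (Pull CC c' d))"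

definition equiv_seq :: "('o,'m,'e) extri_data \<Rightarrow> 'o \<Rightarrow> 'o \<Rightarrow> 'm \<Rightarrow> 'm \<Rightarrow> 'm \<Rightarrow> 'm \<Rightarrow> bool" where
  "equiv_seq CC A C x y x' y' \<longleftrightarrow> (\<exists>B B' b.
     x \<in> hom CC A B \<and> y \<in> hom CC B C \<and> x' \<in> hom CC A B' \<and> y' \<in> hom CC B' C \<and>
     is_iso CC B B' b \<and> Cmp CC b x = x' \<and> Cmp CC y' b = y)"

definition ext_mor :: "('o,'m,'e) extri_data \<Rightarrow> 'e \<Rightarrow> 'e \<Rightarrow> 'm \<Rightarrow> 'm \<Rightarrow> bool" where
  "ext_mor CC d d' a c \<longleftrightarrow> d \<in> EE CC \<and> d' \<in> EE CC \<and>
     a \<in> hom CC (EA CC d) (EA CC d') \<and> c \<in> hom CC (EC CC d) (EC CC d') \<and>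
     Push CC a d = Pull CC c d'"

definition ET2 :: "('o,'m,'e) extri_data \<Rightarrow> bool" where
  "ET2 CC \<longleftrightarrow>
     (\<forall>d x y. Real CC d x y \<longrightarrow> d \<in> EE CC \<and>
        x \<in> hom CC (EA CC d) (Cod CC x) \<and> y \<in> hom CC (Cod CC x) (EC CC d)) \<and>
     (\<forall>d\<in>EE CC. \<exists>x y. Real CC d x y) \<and>
     (\<forall>d x y x' y'. Real CC d x y \<longrightarrow>
        (Real CC d x' y' \<longleftrightarrow> equiv_seq CC (EA CC d) (EC CC d) x y x' y')) \<and>
     (\<forall>d d' x y x' y' a c. Real CC d x y \<longrightarrow> Real CC d' x' y' \<longrightarrow> ext_mor CC d d' a c \<longrightarrow>
        (\<exists>b\<in>hom CC (Cod CC x) (Cod CC x'). Cmp CC b x = Cmp CC x' a \<and> Cmp CC y' b = Cmp CC c y)) \<and>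
     (\<forall>A C S i1 i2 p1 p2. A \<in> Ob CC \<longrightarrow> C \<in> Ob CC \<longrightarrow> biproduct CC A C S i1 i2 p1 p2 \<longrightarrow>
        Real CC (EZer CC C A) i1 p2) \<and>
     (\<forall>d d' x y x' y' SA a1 a2 q1 q2 SB b1 b2 s1 s2 SC c1 c2 r1 r2 t.
        Real CC d x y \<longrightarrow> Real CC d' x' y' \<longrightarrow>
        biproduct CC (EA CC d) (EA CC d') SA a1 a2 q1 q2 \<longrightarrow>
        biproduct CC (Cod CC x) (Cod CC x') SB b1 b2 s1 s2 \<longrightarrow>
        biproduct CC (EC CC d) (EC CC d') SC c1 c2 r1 r2 \<longrightarrow>
        t \<in> ext CC SC SA \<longrightarrow>
        Push CC q1 (Pull CC c1 t) = d \<longrightarrow>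
        Push CC q2 (Pull CC c2 t) = d' \<longrightarrow>
        Push CC q1 (Pull CC c2 t) = EZer CC (EC CC d') (EA CC d) \<longrightarrow>
        Push CC q2 (Pull CC c1 t) = EZer CC (EC CC d) (EA CC d') \<longrightarrow>
        Real CC t (Add CC (Cmp CC b1 (Cmp CC x q1)) (Cmp CC b2 (Cmp CC x' q2)))
                  (Add CC (Cmp CC c1 (Cmp CC y s1)) (Cmp CC c2 (Cmp CC y' s2))))"

definition ET3 :: "('o,'m,'e) extri_data \<Rightarrow> bool" where
  "ET3 CC \<longleftrightarrow>
     (\<forall>d d' x y x' y' a b. Real CC d x y \<longrightarrow> Real CC d' x' y' \<longrightarrow>
        a \<in> hom CC (EA CC d) (EA CC d') \<longrightarrow> b \<in> hom CC (Cod CC x) (Cod CC x') \<longrightarrow>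
        Cmp CC b x = Cmp CC x' a \<longrightarrow>
        (\<exists>c. ext_mor CC d d' a c \<and> Cmp CC c y = Cmp CC y' b))"

definition ET3op :: "('o,'m,'e) extri_data \<Rightarrow> bool" where
  "ET3op CC \<longleftrightarrow>
     (\<forall>d d' x y x' y' b c. Real CC d x y \<longrightarrow> Real CC d' x' y' \<longrightarrow>
        b \<in> hom CC (Cod CC x) (Cod CC x') \<longrightarrow> c \<in> hom CC (EC CC d) (EC CC d') \<longrightarrow>
        Cmp CC y' b = Cmp CC c y \<longrightarrow>
        (\<exists>a. ext_mor CC d d' a c \<and> Cmp CC x' a = Cmp CC b x))"

text \<open>(ET4): d in E(D,A) realized by A -f-> B -f'-> D, d' in E(F,B) realized by
  B -g-> C -g'-> F.\<close>
definition ET4 :: "('o,'m,'e) extri_data \<Rightarrow> bool" where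
  "ET4 CC \<longleftrightarrow>
     (\<forall>d d' f f' g g'. Real CC d f f' \<longrightarrow> Real CC d' g g' \<longrightarrow> EA CC d' = Cod CC f \<longrightarrow>
        (\<exists>d'' h h' dd e.
           Real CC d'' h h' \<and> h = Cmp CC g f \<and>
           dd \<in> hom CC (EC CC d) (EC CC d'') \<and> e \<in> hom CC (EC CC d'') (EC CC d') \<and>
           Cmp CC dd f' = Cmp CC h' g \<and> Cmp CC e h' = g' \<and>
           Real CC (Push CC f' d') dd e \<and>
           Pull CC dd d'' = d \<and> Push CC f d'' = Pull CC e d'))"

text \<open>(ET4)^op: d in E(B,D) realized by D -f'-> A -f-> B, d' in E(C,F) realized by
  F -g'-> B -g-> C.\<close>
definition ET4op :: "('o,'m,'e) extri_data \<Rightarrow> bool" where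
  "ET4op CC \<longleftrightarrow>
     (\<forall>d d' f f' g g'. Real CC d f' f \<longrightarrow> Real CC d' g' g \<longrightarrow> EC CC d = Cod CC g' \<longrightarrow>
        (\<exists>d'' h h' dd e.
           Real CC d'' h' h \<and> h = Cmp CC g f \<and>
           dd \<in> hom CC (EA CC d) (EA CC d'') \<and> e \<in> hom CC (EA CC d'') (EA CC d') \<and>
           f' = Cmp CC h' dd \<and> Cmp CC f h' = Cmp CC g' e \<and>
           Real CC (Pull CC g' d) dd e \<and>
           d' = Push CC e d'' \<and> Push CC dd d = Pull CC g d''))"

definition extriangulated :: "('o,'m,'e) extri_data \<Rightarrow> bool" where
  "extriangulated CC \<longleftrightarrow> additive CC \<and> ET1 CC \<and> ET2 CC \<and> ET3 CC \<and> ET3op CC \<and>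
     ET4 CC \<and> ET4op CC"

definition projective :: "('o,'m,'e) extri_data \<Rightarrow> 'o \<Rightarrow> bool" where
  "projective CC P \<longleftrightarrow> P \<in> Ob CC \<and>
     (\<forall>d x y c. Real CC d x y \<longrightarrow> c \<in> hom CC P (EC CC d) \<longrightarrow>
        (\<exists>b\<in>hom CC P (Cod CC x). Cmp CC y b = c))"

definition injective :: "('o,'m,'e) extri_data \<Rightarrow> 'o \<Rightarrow> bool" where
  "injective CC I \<longleftrightarrow> I \<in> Ob CC \<and>
     (\<forall>d x y a. Real CC d x y \<longrightarrow> a \<in> hom CC (EA CC d) I \<longrightarrow>
        (\<exists>b\<in>hom CC (Cod CC x) I. Cmp CC b x = a))"

definition enough_projectives :: "('o,'m,'e) extri_data \<Rightarrow> bool" where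
  "enough_projectives CC \<longleftrightarrow>
     (\<forall>X\<in>Ob CC. \<exists>d x y. Real CC d x y \<and> EC CC d = X \<and> projective CC (Cod CC x))"

definition enough_injectives :: "('o,'m,'e) extri_data \<Rightarrow> bool" where
  "enough_injectives CC \<longleftrightarrow>
     (\<forall>X\<in>Ob CC. \<exists>d x y. Real CC d x y \<and> EA CC d = X \<and> injective CC (Cod CC x))"

definition local_obj :: "('o,'m,'e) extri_data \<Rightarrow> 'o \<Rightarrow> bool" where
  "local_obj CC X \<longleftrightarrow> X \<in> Ob CC \<and> Idm CC X \<noteq> Zer CC X X \<and>
     (\<forall>f\<in>hom CC X X. is_iso CC X X f \<or> is_iso CC X X (Add CC (Idm CC X) (Neg CC f)))"

definition finite_dsum :: "('o,'m,'e) extri_data \<Rightarrow> 'o \<Rightarrow> 'o list \<Rightarrow> 'm list \<Rightarrow> 'm list \<Rightarrow> bool" where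
  "finite_dsum CC X Xs js ps \<longleftrightarrow> X \<in> Ob CC \<and>
     length js = length Xs \<and> length ps = length Xs \<and>
     (\<forall>j<length Xs. js ! j \<in> hom CC (Xs ! j) X \<and> ps ! j \<in> hom CC X (Xs ! j) \<and>
        (\<forall>l<length Xs. Cmp CC (ps ! l) (js ! j) =
           (if l = j then Idm CC (Xs ! j) else Zer CC (Xs ! j) (Xs ! l)))) \<and>
     foldr (Add CC) (map (\<lambda>j. Cmp CC (js ! j) (ps ! j)) [0..<length Xs]) (Zer CC X X) = Idm CC X"

definition krull_schmidt :: "('o,'m,'e) extri_data \<Rightarrow> bool" where
  "krull_schmidt CC \<longleftrightarrow>
     (\<forall>X\<in>Ob CC. \<exists>Xs js ps. finite_dsum CC X Xs js ps \<and> (\<forall>Y\<in>set Xs. local_obj CC Y))"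

section \<open>Subcategories, higher extensions, tilting\<close>

text \<open>Full additive subcategory closed under isomorphisms (given by its objects).\<close>
definition subcat :: "('o,'m,'e) extri_data \<Rightarrow> 'o set \<Rightarrow> bool" where
  "subcat CC T \<longleftrightarrow> T \<subseteq> Ob CC \<and>
     (\<forall>X Y f. X \<in> T \<longrightarrow> is_iso CC X Y f \<longrightarrow> Y \<in> T) \<and>
     (\<exists>Z\<in>T. zero_object CC Z) \<and>
     (\<forall>X\<in>T. \<forall>Y\<in>T. \<forall>S i1 i2 p1 p2. biproduct CC X Y S i1 i2 p1 p2 \<longrightarrow> S \<in> T)"

definition summand_closed :: "('o,'m,'e) extri_data \<Rightarrow> 'o set \<Rightarrow> bool" where
  "summand_closed CC T \<longleftrightarrow>
     (\<forall>X Y S i1 i2 p1 p2. biproduct CC X Y S i1 i2 p1 p2 \<longrightarrow> S \<in> T \<longrightarrow> X \<in> T)"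

definition Omega :: "('o,'m,'e) extri_data \<Rightarrow> 'o \<Rightarrow> 'o" where
  "Omega CC X = (SOME K. \<exists>d x y. Real CC d x y \<and> EA CC d = K \<and> EC CC d = X \<and>
                                  projective CC (Cod CC x))"

text \<open>E^i(X,Y) = E(Omega^(i-1) X, Y) = 0, for i >= 1.\<close>
definition Ehigh_zero :: "('o,'m,'e) extri_data \<Rightarrow> nat \<Rightarrow> 'o \<Rightarrow> 'o \<Rightarrow> bool" where
  "Ehigh_zero CC i X Y \<longleftrightarrow>
     ext CC ((Omega CC ^^ (i - 1)) X) Y \<subseteq> {EZer CC ((Omega CC ^^ (i - 1)) X) Y}"

definition pd_le :: "('o,'m,'e) extri_data \<Rightarrow> nat \<Rightarrow> 'o \<Rightarrow> bool" where
  "pd_le CC n A \<longleftrightarrow> (\<forall>Y\<in>Ob CC. Ehigh_zero CC (n + 1) A Y)"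

definition perp :: "('o,'m,'e) extri_data \<Rightarrow> 'o set \<Rightarrow> 'o set" where
  "perp CC S = {Y \<in> Ob CC. \<forall>i\<ge>1. \<forall>X\<in>S. Ehigh_zero CC i X Y}"

definition tilting :: "('o,'m,'e) extri_data \<Rightarrow> nat \<Rightarrow> 'o set \<Rightarrow> bool" where
  "tilting CC n T \<longleftrightarrow> subcat CC T \<and> summand_closed CC T \<and>
     (\<forall>X\<in>T. pd_le CC n X) \<and> T \<subseteq> perp CC T \<and>
     (\<forall>Y\<in>perp CC T. \<exists>d x y. Real CC d x y \<and> EC CC d = Y \<and>
        Cod CC x \<in> T \<and> EA CC d \<in> perp CC T)"

end

theory Submission
  imports Defs
begin

lemma ag_rid: "abgroup_on G add z neg \<Longrightarrow> a \<in> G \<Longrightarrow> add a z = a"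
proof -
  assume g: "abgroup_on G add z neg" and a: "a \<in> G"
  have "z \<in> G" "\<forall>a\<in>G. \<forall>b\<in>G. add a b = add b a" "\<forall>a\<in>G. add z a = a"
    using g unfolding abgroup_on_def by auto
  thus ?thesis using a by metis
qed

lemma ag_cancel: "abgroup_on G add z neg \<Longrightarrow> w \<in> G \<Longrightarrow> add w w = w \<Longrightarrow> w = z"
proof -
  assume g: "abgroup_on G add z neg" and w: "w \<in> G" and ww: "add w w = w"
  have n: "neg w \<in> G" and as: "add (add (neg w) w) w = add (neg w) (add w w)"
    and iv: "add (neg w) w = z" and zl: "add z w = w"
    using g w unfolding abgroup_on_def by auto
  have "w = add z w" using zl by simp
  also have "\<dots> = add (add (neg w) w) w" using iv by simp
  also have "\<dots> = add (neg w) (add w w)" using as .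
  also have "\<dots> = z" using ww iv by simp
  finally show ?thesis .
qed

lemma ag_add: "abgroup_on G add z neg \<Longrightarrow> a \<in> G \<Longrightarrow> b \<in> G \<Longrightarrow> add a b \<in> G"
  unfolding abgroup_on_def by blast

lemma ag_zl: "abgroup_on G add z neg \<Longrightarrow> a \<in> G \<Longrightarrow> add z a = a"
  unfolding abgroup_on_def by blast

lemma ag_comm: "abgroup_on G add z neg \<Longrightarrow> a \<in> G \<Longrightarrow> b \<in> G \<Longrightarrow> add a b = add b a"
  unfolding abgroup_on_def by blast

lemma ag_zero: "abgroup_on G add z neg \<Longrightarrow> z \<in> G"
  unfolding abgroup_on_def by blast

context
  fixes CC :: "('o,'m,'e) extri_data"
  assumes ex: "extriangulated CC"
begin

lemmas XX = ex[unfolded extriangulated_def]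
lemmas addi = XX[THEN conjunct1]
lemmas et1 = XX[THEN conjunct2, THEN conjunct1]
lemmas et2 = XX[THEN conjunct2, THEN conjunct2, THEN conjunct1]
lemmas et3 = XX[THEN conjunct2, THEN conjunct2, THEN conjunct2, THEN conjunct1]
lemmas et3op = XX[THEN conjunct2, THEN conjunct2, THEN conjunct2, THEN conjunct2, THEN conjunct1]
lemmas AD = addi[unfolded additive_def]
lemmas pre = AD[THEN conjunct1]
lemmas PR = pre[unfolded preadditive_def]
lemmas cat = PR[THEN conjunct1]
lemmas CA = cat[unfolded is_category_def]

lemma hom_Ob: "f \<in> hom CC X Y \<Longrightarrow> X \<in> Ob CC \<and> Y \<in> Ob CC"
proof -
  assume "f \<in> hom CC X Y"
  hence "f \<in> Mor CC" "Dom CC f = X" "Cod CC f = Y" unfolding hom_def by auto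
  thus ?thesis using CA[THEN conjunct1] by blast
qed

lemma comp: "f \<in> hom CC X Y \<Longrightarrow> g \<in> hom CC Y Z \<Longrightarrow> Cmp CC g f \<in> hom CC X Z"
  by (rule CA[THEN conjunct2, THEN conjunct2, THEN conjunct1, rule_format])

lemma idm: "X \<in> Ob CC \<Longrightarrow> Idm CC X \<in> hom CC X X"
  by (rule CA[THEN conjunct2, THEN conjunct1, rule_format])

lemma idl: "f \<in> hom CC X Y \<Longrightarrow> Cmp CC (Idm CC Y) f = f"
  by (rule CA[THEN conjunct2, THEN conjunct2, THEN conjunct2, THEN conjunct1, rule_format, THEN conjunct1])

lemma idr: "f \<in> hom CC X Y \<Longrightarrow> Cmp CC f (Idm CC X) = f"
  by (rule CA[THEN conjunct2, THEN conjunct2, THEN conjunct2, THEN conjunct1, rule_format, THEN conjunct2])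

lemma assoc: "f \<in> hom CC W X \<Longrightarrow> g \<in> hom CC X Y \<Longrightarrow> h \<in> hom CC Y Z \<Longrightarrow>
        Cmp CC h (Cmp CC g f) = Cmp CC (Cmp CC h g) f"
  by (rule CA[THEN conjunct2, THEN conjunct2, THEN conjunct2, THEN conjunct2, rule_format])

lemma homgrp: "X \<in> Ob CC \<Longrightarrow> Y \<in> Ob CC \<Longrightarrow> abgroup_on (hom CC X Y) (Add CC) (Zer CC X Y) (Neg CC)"
  by (rule PR[THEN conjunct2, THEN conjunct1, rule_format])

lemma ldist: "f \<in> hom CC X Y \<Longrightarrow> f' \<in> hom CC X Y \<Longrightarrow> g \<in> hom CC Y Z \<Longrightarrow>
        Cmp CC g (Add CC f f') = Add CC (Cmp CC g f) (Cmp CC g f')"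
  by (rule PR[THEN conjunct2, THEN conjunct2, THEN conjunct1, rule_format])

lemma rdist: "f \<in> hom CC X Y \<Longrightarrow> g \<in> hom CC Y Z \<Longrightarrow> g' \<in> hom CC Y Z \<Longrightarrow>
        Cmp CC (Add CC g g') f = Add CC (Cmp CC g f) (Cmp CC g' f)"
  by (rule PR[THEN conjunct2, THEN conjunct2, THEN conjunct2, rule_format])

lemma zer_hom: "X \<in> Ob CC \<Longrightarrow> Y \<in> Ob CC \<Longrightarrow> Zer CC X Y \<in> hom CC X Y"
  using ag_zero[OF homgrp] .

lemma add_hom: "f \<in> hom CC X Y \<Longrightarrow> g \<in> hom CC X Y \<Longrightarrow> Add CC f g \<in> hom CC X Y"
  using ag_add[OF homgrp[of X Y]] hom_Ob[of f X Y] by blast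

lemma add_zl: "f \<in> hom CC X Y \<Longrightarrow> Add CC (Zer CC X Y) f = f"
  using ag_zl[OF homgrp[of X Y]] hom_Ob[of f X Y] by blast

lemma add_zr: "f \<in> hom CC X Y \<Longrightarrow> Add CC f (Zer CC X Y) = f"
  using ag_rid[OF homgrp[of X Y]] hom_Ob[of f X Y] by blast

lemma add_comm: "f \<in> hom CC X Y \<Longrightarrow> g \<in> hom CC X Y \<Longrightarrow> Add CC f g = Add CC g f"
  using ag_comm[OF homgrp[of X Y]] hom_Ob[of f X Y] by blast

lemma comp_zer: "g \<in> hom CC Y Z \<Longrightarrow> X \<in> Ob CC \<Longrightarrow> Cmp CC g (Zer CC X Y) = Zer CC X Z"
proof -
  assume g: "g \<in> hom CC Y Z" and X: "X \<in> Ob CC"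
  have Y: "Y \<in> Ob CC" "Z \<in> Ob CC" using hom_Ob[OF g] by auto
  have z: "Zer CC X Y \<in> hom CC X Y" using zer_hom X Y by auto
  have "Cmp CC g (Zer CC X Y) = Cmp CC g (Add CC (Zer CC X Y) (Zer CC X Y))"
    using add_zl[OF z] by simp
  also have "\<dots> = Add CC (Cmp CC g (Zer CC X Y)) (Cmp CC g (Zer CC X Y))"
    using ldist[OF z z g] .
  finally show ?thesis using ag_cancel[OF homgrp[OF X Y(2)] comp[OF z g]] by simp
qed

lemmas E1 = et1[unfolded ET1_def]
lemmas E1_1 = E1[THEN conjunct1]
lemmas E1_2 = E1[THEN conjunct2, THEN conjunct1]
lemmas E1_3 = E1[THEN conjunct2, THEN conjunct2, THEN conjunct1]
lemmas E1_4 = E1[THEN conjunct2, THEN conjunct2, THEN conjunct2, THEN conjunct1]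
lemmas E1_5 = E1[THEN conjunct2, THEN conjunct2, THEN conjunct2, THEN conjunct2, THEN conjunct1]
lemmas E1_6 = E1[THEN conjunct2, THEN conjunct2, THEN conjunct2, THEN conjunct2, THEN conjunct2, THEN conjunct1]
lemmas E1_7 = E1[THEN conjunct2, THEN conjunct2, THEN conjunct2, THEN conjunct2, THEN conjunct2, THEN conjunct2, THEN conjunct1]
lemmas E1_9 = E1[THEN conjunct2, THEN conjunct2, THEN conjunct2, THEN conjunct2, THEN conjunct2, THEN conjunct2, THEN conjunct2, THEN conjunct2, THEN conjunct1]
lemmas E1_11 = E1[THEN conjunct2, THEN conjunct2, THEN conjunct2, THEN conjunct2, THEN conjunct2, THEN conjunct2, THEN conjunct2, THEN conjunct2, THEN conjunct2, THEN conjunct2, THEN conjunct1]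

lemma ext_Ob: "d \<in> ext CC C A \<Longrightarrow> C \<in> Ob CC \<and> A \<in> Ob CC"
proof -
  assume "d \<in> ext CC C A"
  hence "d \<in> EE CC" "EC CC d = C" "EA CC d = A" unfolding ext_def by auto
  thus ?thesis using E1_1 by blast
qed

lemma extgrp: "C \<in> Ob CC \<Longrightarrow> A \<in> Ob CC \<Longrightarrow> abgroup_on (ext CC C A) (EAdd CC) (EZer CC C A) (ENeg CC)"
  by (rule E1_2[rule_format])

lemma ezer_ext: "C \<in> Ob CC \<Longrightarrow> A \<in> Ob CC \<Longrightarrow> EZer CC C A \<in> ext CC C A"
  using ag_zero[OF extgrp] .

lemma push_ext: "a \<in> hom CC A A' \<Longrightarrow> d \<in> ext CC C A \<Longrightarrow> Push CC a d \<in> ext CC C A'"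
  by (rule E1_3[rule_format])

lemma pull_ext: "c \<in> hom CC C' C \<Longrightarrow> d \<in> ext CC C A \<Longrightarrow> Pull CC c d \<in> ext CC C' A"
  by (rule E1_4[rule_format])

lemma push_id: "d \<in> ext CC C A \<Longrightarrow> Push CC (Idm CC A) d = d"
  by (rule E1_5[rule_format, THEN conjunct1])

lemma pull_id: "d \<in> ext CC C A \<Longrightarrow> Pull CC (Idm CC C) d = d"
  by (rule E1_5[rule_format, THEN conjunct2])

lemma push_comp: "a \<in> hom CC A A' \<Longrightarrow> a' \<in> hom CC A' A'' \<Longrightarrow> d \<in> ext CC C A \<Longrightarrow>
        Push CC (Cmp CC a' a) d = Push CC a' (Push CC a d)"
  by (rule E1_6[rule_format])

lemma pull_comp: "c \<in> hom CC C' C \<Longrightarrow> c' \<in> hom CC C'' C' \<Longrightarrow> d \<in> ext CC C A \<Longrightarrow>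
        Pull CC (Cmp CC c c') d = Pull CC c' (Pull CC c d)"
  by (rule E1_7[rule_format])

lemma push_zero: "a \<in> hom CC A A' \<Longrightarrow> C \<in> Ob CC \<Longrightarrow> Push CC a (EZer CC C A) = EZer CC C A'"
proof -
  assume a: "a \<in> hom CC A A'" and C: "C \<in> Ob CC"
  have O: "A \<in> Ob CC" "A' \<in> Ob CC" using hom_Ob[OF a] by auto
  have z: "EZer CC C A \<in> ext CC C A" using ezer_ext C O by auto
  have zz: "EAdd CC (EZer CC C A) (EZer CC C A) = EZer CC C A"
    using ag_zl[OF extgrp[OF C O(1)] z] .
  have "Push CC a (EZer CC C A) = Push CC a (EAdd CC (EZer CC C A) (EZer CC C A))" using zz by simp
  also have "\<dots> = EAdd CC (Push CC a (EZer CC C A)) (Push CC a (EZer CC C A))"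
    by (rule E1_9[rule_format, OF a z z])
  finally show ?thesis using ag_cancel[OF extgrp[OF C O(2)] push_ext[OF a z]] by simp
qed

lemma pull_zero: "c \<in> hom CC C' C \<Longrightarrow> A \<in> Ob CC \<Longrightarrow> Pull CC c (EZer CC C A) = EZer CC C' A"
proof -
  assume c: "c \<in> hom CC C' C" and A: "A \<in> Ob CC"
  have O: "C' \<in> Ob CC" "C \<in> Ob CC" using hom_Ob[OF c] by auto
  have z: "EZer CC C A \<in> ext CC C A" using ezer_ext A O by auto
  have zz: "EAdd CC (EZer CC C A) (EZer CC C A) = EZer CC C A"
    using ag_zl[OF extgrp[OF O(2) A] z] .
  have "Pull CC c (EZer CC C A) = Pull CC c (EAdd CC (EZer CC C A) (EZer CC C A))" using zz by simp
  also have "\<dots> = EAdd CC (Pull CC c (EZer CC C A)) (Pull CC c (EZer CC C A))"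
    by (rule E1_11[rule_format, OF c z z])
  finally show ?thesis using ag_cancel[OF extgrp[OF O(1) A] pull_ext[OF c z]] by simp
qed

lemmas E2 = et2[unfolded ET2_def]
lemmas E2_1 = E2[THEN conjunct1]
lemmas E2_2 = E2[THEN conjunct2, THEN conjunct1]
lemmas E2_3 = E2[THEN conjunct2, THEN conjunct2, THEN conjunct1]
lemmas E2_4 = E2[THEN conjunct2, THEN conjunct2, THEN conjunct2, THEN conjunct1]
lemmas E2_5 = E2[THEN conjunct2, THEN conjunct2, THEN conjunct2, THEN conjunct2, THEN conjunct1]

lemma real_props: "Real CC d x y \<Longrightarrow> d \<in> EE CC \<and>
        x \<in> hom CC (EA CC d) (Cod CC x) \<and> y \<in> hom CC (Cod CC x) (EC CC d)"
  by (rule E2_1[rule_format])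

lemma real_ex: "d \<in> EE CC \<Longrightarrow> \<exists>x y. Real CC d x y"
  by (rule E2_2[rule_format])

lemma real_zero: "A \<in> Ob CC \<Longrightarrow> C \<in> Ob CC \<Longrightarrow> biproduct CC A C S i1 i2 p1 p2 \<Longrightarrow>
        Real CC (EZer CC C A) i1 p2"
  by (rule E2_5[rule_format])

lemma real_equiv: "Real CC d x y \<Longrightarrow> Real CC d x' y' \<Longrightarrow> equiv_seq CC (EA CC d) (EC CC d) x y x' y'"
  by (rule E2_3[rule_format, THEN iffD1])

lemma mor_lift: "Real CC d x y \<Longrightarrow> Real CC d' x' y' \<Longrightarrow> ext_mor CC d d' a c \<Longrightarrow>
        (\<exists>b\<in>hom CC (Cod CC x) (Cod CC x'). Cmp CC b x = Cmp CC x' a \<and> Cmp CC y' b = Cmp CC c y)"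
  by (rule E2_4[rule_format])

lemma bip_ex: "X \<in> Ob CC \<Longrightarrow> Y \<in> Ob CC \<Longrightarrow> \<exists>S i1 i2 p1 p2. biproduct CC X Y S i1 i2 p1 p2"
  using AD[THEN conjunct2, THEN conjunct2] by blast


lemmas et3r = et3[unfolded ET3_def, rule_format]
lemmas et3opr = et3op[unfolded ET3op_def, rule_format]

lemma hom_cod: "f \<in> hom CC X Y \<Longrightarrow> Cod CC f = Y"
  unfolding hom_def by auto

lemma extI: "d \<in> EE CC \<Longrightarrow> d \<in> ext CC (EC CC d) (EA CC d)"
  unfolding ext_def by auto

lemma ext_EE: "d \<in> ext CC C A \<Longrightarrow> d \<in> EE CC \<and> EC CC d = C \<and> EA CC d = A"
  unfolding ext_def by auto

lemma ext_zero_all: "ext CC W Y \<subseteq> {EZer CC W Y} \<Longrightarrow> d \<in> ext CC W Y \<Longrightarrow> d = EZer CC W Y"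
  by auto

lemma omega_tri:
  assumes ep: "enough_projectives CC" and W: "W \<in> Ob CC"
  shows "\<exists>d x y. Real CC d x y \<and> EA CC d = Omega CC W \<and> EC CC d = W \<and> projective CC (Cod CC x)"
proof -
  obtain d x y where h: "Real CC d x y" "EC CC d = W" "projective CC (Cod CC x)"
    using ep W unfolding enough_projectives_def by blast
  hence "\<exists>K. \<exists>d x y. Real CC d x y \<and> EA CC d = K \<and> EC CC d = W \<and> projective CC (Cod CC x)"
    by blast
  from someI_ex[OF this] show ?thesis unfolding Omega_def by blast
qed

lemma omega_Ob:
  assumes ep: "enough_projectives CC" and W: "W \<in> Ob CC"
  shows "Omega CC W \<in> Ob CC"
proof -
  obtain d x y where h: "Real CC d x y" "EA CC d = Omega CC W"
    using omega_tri[OF ep W] by blast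
  have "d \<in> EE CC" using real_props[OF h(1)] by blast
  hence "EA CC d \<in> Ob CC" using E1_1 by blast
  thus ?thesis using h(2) by simp
qed

lemma iter_Ob:
  assumes ep: "enough_projectives CC" and X: "X \<in> Ob CC"
  shows "(Omega CC ^^ k) X \<in> Ob CC"
  by (induction k) (auto simp: X omega_Ob[OF ep])

lemma shift:
  assumes ep: "enough_projectives CC" and W: "W \<in> Ob CC" and r: "Real CC d x y"
    and zB: "ext CC W (Cod CC x) \<subseteq> {EZer CC W (Cod CC x)}"
    and zA: "ext CC (Omega CC W) (EA CC d) \<subseteq> {EZer CC (Omega CC W) (EA CC d)}"
  shows "ext CC W (EC CC d) \<subseteq> {EZer CC W (EC CC d)}"
proof
  fix e assume e: "e \<in> ext CC W (EC CC d)"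
  define C where "C = EC CC d"
  define A where "A = EA CC d"
  define B where "B = Cod CC x"
  define Om where "Om = Omega CC W"
  have rp: "d \<in> EE CC" "x \<in> hom CC A B" "y \<in> hom CC B C"
    using real_props[OF r] unfolding A_def B_def C_def by auto
  have dext: "d \<in> ext CC C A" unfolding C_def A_def using extI rp(1) .
  obtain dl u v where dl: "Real CC dl u v" "EA CC dl = Om" "EC CC dl = W" "projective CC (Cod CC u)"
    using omega_tri[OF ep W] unfolding Om_def by blast
  have dlp: "dl \<in> EE CC" "u \<in> hom CC Om (Cod CC u)" "v \<in> hom CC (Cod CC u) W"
    using real_props[OF dl(1)] dl(2,3) by auto
  have dlext: "dl \<in> ext CC W Om" using extI[OF dlp(1)] dl(2,3) by simp
  have eE: "e \<in> EE CC" "EC CC e = W" "EA CC e = C" using ext_EE[OF e] unfolding C_def by auto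
  obtain x' y' where r': "Real CC e x' y'" using real_ex[OF eE(1)] by blast
  have rp': "y' \<in> hom CC (Cod CC x') W" using real_props[OF r'] eE by auto
  obtain g where g: "g \<in> hom CC (Cod CC u) (Cod CC x')" "Cmp CC y' g = v"
    using dl(4) r' dlp(3) eE(2) unfolding projective_def by metis
  have idW: "Idm CC W \<in> hom CC (EC CC dl) (EC CC e)" using idm[OF W] dl(3) eE(2) by simp
  have "Cmp CC y' g = Cmp CC (Idm CC W) v" using g(2) idl[OF dlp(3)] by simp
  from et3opr[OF dl(1) r' g(1) idW this]
  obtain a where a: "ext_mor CC dl e a (Idm CC W)" by blast
  have ah: "a \<in> hom CC Om C" and pa: "Push CC a dl = Pull CC (Idm CC W) e"
    using a dl(2) eE unfolding ext_mor_def by auto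
  have pa2: "Push CC a dl = e" using pa pull_id[OF e] by simp
  have OmOb: "Om \<in> Ob CC" and AOb: "A \<in> Ob CC" using hom_Ob[OF ah] hom_Ob[OF rp(2)] by auto
  have "Pull CC a d \<in> ext CC Om A" using pull_ext[OF ah dext] .
  hence pz: "Pull CC a d = EZer CC Om A" using zA unfolding Om_def A_def by auto
  obtain S i1 i2 p1 p2 where bp: "biproduct CC A Om S i1 i2 p1 p2" using bip_ex[OF AOb OmOb] by blast
  have bpp: "i1 \<in> hom CC A S" "i2 \<in> hom CC Om S" "p2 \<in> hom CC S Om" "Cmp CC p2 i2 = Idm CC Om"
    using bp unfolding biproduct_def by auto
  have rz: "Real CC (EZer CC Om A) i1 p2" using real_zero[OF AOb OmOb bp] .
  have zext: "EZer CC Om A \<in> ext CC Om A" using ezer_ext[OF OmOb AOb] .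
  have em: "ext_mor CC (EZer CC Om A) d (Idm CC A) a"
    unfolding ext_mor_def using ext_EE[OF zext] rp(1) idm[OF AOb] ah pz push_id[OF zext]
    unfolding A_def C_def by auto
  obtain b' where b': "b' \<in> hom CC (Cod CC i1) (Cod CC x)" "Cmp CC y b' = Cmp CC a p2"
    using mor_lift[OF rz r em] by blast
  have b'h: "b' \<in> hom CC S B" using b'(1) hom_cod[OF bpp(1)] unfolding B_def by simp
  define b where "b = Cmp CC b' i2"
  have bh: "b \<in> hom CC Om B" unfolding b_def using comp[OF bpp(2) b'h] .
  have "Cmp CC y b = Cmp CC (Cmp CC y b') i2" unfolding b_def using assoc[OF bpp(2) b'h rp(3)] .
  also have "\<dots> = Cmp CC (Cmp CC a p2) i2" using b'(2) by simp
  also have "\<dots> = Cmp CC a (Cmp CC p2 i2)" using assoc[OF bpp(2) bpp(3) ah] by simp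
  also have "\<dots> = a" using bpp(4) idr[OF ah] by simp
  finally have yb: "Cmp CC y b = a" .
  have "e = Push CC (Cmp CC y b) dl" using pa2 yb by simp
  also have "\<dots> = Push CC y (Push CC b dl)" using push_comp[OF bh rp(3) dlext] .
  also have "Push CC b dl = EZer CC W B" using push_ext[OF bh dlext] zB unfolding B_def by auto
  also have "Push CC y (EZer CC W B) = EZer CC W C" using push_zero[OF rp(3) W] .
  finally show "e \<in> {EZer CC W (EC CC d)}" unfolding C_def by simp
qed

lemma proj_ext_zero:
  assumes Q: "projective CC Q"
  shows "ext CC Q C \<subseteq> {EZer CC Q C}"
proof
  fix e assume e: "e \<in> ext CC Q C"
  have eE: "e \<in> EE CC" "EC CC e = Q" "EA CC e = C" using ext_EE[OF e] by auto
  have QO: "Q \<in> Ob CC" "C \<in> Ob CC" using ext_Ob[OF e] by auto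
  obtain x y where r: "Real CC e x y" using real_ex[OF eE(1)] by blast
  define B where "B = Cod CC x"
  have rp: "x \<in> hom CC C B" "y \<in> hom CC B Q" using real_props[OF r] eE unfolding B_def by auto
  have BO: "B \<in> Ob CC" using hom_Ob[OF rp(1)] by auto
  obtain s where s: "s \<in> hom CC Q B" "Cmp CC y s = Idm CC Q"
    using Q r idm[OF QO(1)] eE(2) unfolding projective_def B_def by metis
  obtain S i1 i2 p1 p2 where bp: "biproduct CC C B S i1 i2 p1 p2" using bip_ex[OF QO(2) BO] by blast
  have bpp: "i1 \<in> hom CC C S" "i2 \<in> hom CC B S" "p1 \<in> hom CC S C" "p2 \<in> hom CC S B"
     "Cmp CC p1 i1 = Idm CC C" "Cmp CC p2 i2 = Idm CC B"
     "Cmp CC p1 i2 = Zer CC B C" "Cmp CC p2 i1 = Zer CC C B"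
    using bp unfolding biproduct_def by auto
  have rz: "Real CC (EZer CC B C) i1 p2" using real_zero[OF QO(2) BO bp] .
  have zext: "EZer CC B C \<in> ext CC B C" using ezer_ext[OF BO QO(2)] .
  have zE: "EA CC (EZer CC B C) = C" "EC CC (EZer CC B C) = B" using ext_EE[OF zext] by auto
  define b where "b = Add CC (Cmp CC x p1) p2"
  have xp1: "Cmp CC x p1 \<in> hom CC S B" using comp[OF bpp(3) rp(1)] .
  have bh: "b \<in> hom CC S B" unfolding b_def using add_hom[OF xp1 bpp(4)] .
  have "Cmp CC b i1 = Add CC (Cmp CC (Cmp CC x p1) i1) (Cmp CC p2 i1)"
    unfolding b_def using rdist[OF bpp(1) xp1 bpp(4)] .
  also have "Cmp CC (Cmp CC x p1) i1 = x"
    using assoc[OF bpp(1) bpp(3) rp(1)] bpp(5) idr[OF rp(1)] by simp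
  finally have bi1: "Cmp CC b i1 = x" using bpp(8) add_zr[OF rp(1)] by simp
  have "Cmp CC b i2 = Add CC (Cmp CC (Cmp CC x p1) i2) (Cmp CC p2 i2)"
    unfolding b_def using rdist[OF bpp(2) xp1 bpp(4)] .
  also have "Cmp CC (Cmp CC x p1) i2 = Zer CC B B"
    using assoc[OF bpp(2) bpp(3) rp(1)] bpp(7) comp_zer[OF rp(1) BO] by simp
  finally have bi2: "Cmp CC b i2 = Idm CC B" using bpp(6) add_zl[OF idm[OF BO]] by simp
  have a1: "Idm CC C \<in> hom CC (EA CC (EZer CC B C)) (EA CC e)" using idm[OF QO(2)] zE eE by simp
  have b1: "b \<in> hom CC (Cod CC i1) (Cod CC x)" using bh hom_cod[OF bpp(1)] unfolding B_def by simp
  have "Cmp CC b i1 = Cmp CC x (Idm CC C)" using bi1 idr[OF rp(1)] by simp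
  from et3r[OF rz r a1 b1 this]
  obtain c where c: "ext_mor CC (EZer CC B C) e (Idm CC C) c" "Cmp CC c p2 = Cmp CC y b" by blast
  have ch: "c \<in> hom CC B Q" and pc: "Push CC (Idm CC C) (EZer CC B C) = Pull CC c e"
    using c(1) zE eE unfolding ext_mor_def by auto
  have "c = Cmp CC c (Cmp CC p2 i2)" using bpp(6) idr[OF ch] by simp
  also have "\<dots> = Cmp CC (Cmp CC y b) i2" using assoc[OF bpp(2) bpp(4) ch] c(2) by simp
  also have "\<dots> = Cmp CC y (Cmp CC b i2)" using assoc[OF bpp(2) bh rp(2)] by simp
  also have "\<dots> = y" using bi2 idr[OF rp(2)] by simp
  finally have cy: "c = y" .
  have py: "Pull CC y e = EZer CC B C" using pc cy push_id[OF zext] by simp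
  have "e = Pull CC (Cmp CC y s) e" using s(2) pull_id[OF e] by simp
  also have "\<dots> = Pull CC s (Pull CC y e)" using pull_comp[OF rp(2) s(1) e] .
  also have "\<dots> = EZer CC Q C" using py pull_zero[OF s(1) QO(2)] by simp
  finally show "e \<in> {EZer CC Q C}" by simp
qed

lemma retract_proj:
  assumes r: "Real CC d u v" and P: "projective CC (Cod CC u)"
    and z: "d = EZer CC (EC CC d) (EA CC d)"
  shows "projective CC (EA CC d)"
proof -
  define K where "K = EA CC d"
  define W where "W = EC CC d"
  have rp: "d \<in> EE CC" "u \<in> hom CC K (Cod CC u)" "v \<in> hom CC (Cod CC u) W"
    using real_props[OF r] unfolding K_def W_def by auto
  have KO: "K \<in> Ob CC" "W \<in> Ob CC" using hom_Ob[OF rp(2)] hom_Ob[OF rp(3)] by auto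
  obtain S i1 i2 p1 p2 where bp: "biproduct CC K W S i1 i2 p1 p2" using bip_ex[OF KO] by blast
  have bpp: "i1 \<in> hom CC K S" "p1 \<in> hom CC S K" "Cmp CC p1 i1 = Idm CC K"
    using bp unfolding biproduct_def by auto
  have "Real CC (EZer CC W K) i1 p2" using real_zero[OF KO bp] .
  hence rz: "Real CC d i1 p2" using z unfolding K_def W_def by simp
  from real_equiv[OF r rz] obtain B B' b where
    eq: "u \<in> hom CC (EA CC d) B" "i1 \<in> hom CC (EA CC d) B'" "is_iso CC B B' b" "Cmp CC b u = i1"
    unfolding equiv_seq_def by blast
  have BB: "B = Cod CC u" "B' = S" using hom_cod[OF eq(1)] hom_cod[OF eq(2)] hom_cod[OF bpp(1)] by auto
  have bh: "b \<in> hom CC (Cod CC u) S" using eq(3) BB unfolding is_iso_def by simp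
  define rr where "rr = Cmp CC p1 b"
  have rh: "rr \<in> hom CC (Cod CC u) K" unfolding rr_def using comp[OF bh bpp(2)] .
  have ru: "Cmp CC rr u = Idm CC K" unfolding rr_def
    using assoc[OF rp(2) bh bpp(2)] eq(4) bpp(3) by simp
  show ?thesis unfolding projective_def K_def[symmetric]
  proof (intro conjI allI impI)
    show "K \<in> Ob CC" using KO by simp
    fix d' x y c assume r': "Real CC d' x y" and c: "c \<in> hom CC K (EC CC d')"
    have cr: "Cmp CC c rr \<in> hom CC (Cod CC u) (EC CC d')" using comp[OF rh c] .
    obtain g where g: "g \<in> hom CC (Cod CC u) (Cod CC x)" "Cmp CC y g = Cmp CC c rr"
      using P r' cr unfolding projective_def by metis
    have yh: "y \<in> hom CC (Cod CC x) (EC CC d')" using real_props[OF r'] by auto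
    have "Cmp CC y (Cmp CC g u) = Cmp CC (Cmp CC y g) u" using assoc[OF rp(2) g(1) yh] .
    also have "\<dots> = Cmp CC c (Cmp CC rr u)" using g(2) assoc[OF rp(2) rh c] by simp
    also have "\<dots> = c" using ru idr[OF c] by simp
    finally show "\<exists>b\<in>hom CC K (Cod CC x). Cmp CC y b = c" using comp[OF rp(2) g(1)] by blast
  qed
qed

lemma vanish_step:
  assumes ep: "enough_projectives CC" and W: "W \<in> Ob CC"
    and z: "\<forall>Y. ext CC W Y \<subseteq> {EZer CC W Y}"
  shows "\<forall>Y. ext CC (Omega CC W) Y \<subseteq> {EZer CC (Omega CC W) Y}"
proof -
  obtain d x y where h: "Real CC d x y" "EA CC d = Omega CC W" "EC CC d = W" "projective CC (Cod CC x)"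
    using omega_tri[OF ep W] by blast
  have "d \<in> ext CC W (Omega CC W)" using extI real_props[OF h(1)] h(2,3) by metis
  hence "d = EZer CC (EC CC d) (EA CC d)" using z h(2,3) by auto
  hence "projective CC (Omega CC W)" using retract_proj[OF h(1) h(4)] h(2) by simp
  thus ?thesis using proj_ext_zero by blast
qed

lemma vanish_iter:
  assumes ep: "enough_projectives CC" and W: "W \<in> Ob CC"
    and z: "\<forall>Y. ext CC W Y \<subseteq> {EZer CC W Y}"
  shows "\<forall>Y. ext CC ((Omega CC ^^ j) W) Y \<subseteq> {EZer CC ((Omega CC ^^ j) W) Y}"
proof (induction j)
  case 0 thus ?case using z by simp
next
  case (Suc j) thus ?case using vanish_step[OF ep iter_Ob[OF ep W]] by simp
qed

lemma high_vanish:
  assumes ep: "enough_projectives CC" and X: "X \<in> Ob CC" and pd: "pd_le CC n X"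
    and m: "n + 1 \<le> m"
  shows "Ehigh_zero CC m X Y"
proof -
  have z0: "\<forall>Y. ext CC ((Omega CC ^^ n) X) Y \<subseteq> {EZer CC ((Omega CC ^^ n) X) Y}"
  proof
    fix Y show "ext CC ((Omega CC ^^ n) X) Y \<subseteq> {EZer CC ((Omega CC ^^ n) X) Y}"
    proof (cases "Y \<in> Ob CC")
      case True thus ?thesis using pd unfolding pd_le_def Ehigh_zero_def by auto
    next
      case False thus ?thesis using ext_Ob by blast
    qed
  qed
  have e: "(Omega CC ^^ (m - 1)) X = (Omega CC ^^ (m - 1 - n)) ((Omega CC ^^ n) X)"
  proof -
    have "m - 1 = (m - 1 - n) + n" using m by simp
    hence "(Omega CC ^^ (m - 1)) X = (Omega CC ^^ ((m - 1 - n) + n)) X" by simp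
    thus ?thesis by (simp only: funpow_add comp_apply)
  qed
  show ?thesis unfolding Ehigh_zero_def e
    using vanish_iter[OF ep iter_Ob[OF ep X] z0] by blast
qed

lemma tilt_Ob: "tilting CC n T \<Longrightarrow> T \<subseteq> Ob CC"
  unfolding tilting_def subcat_def by blast

lemma perp_mono:
  assumes ep: "enough_projectives CC" and t1: "tilting CC n T1" and t2: "tilting CC n T2"
    and le: "T1 \<subseteq> perp CC T2"
  shows "perp CC T1 \<subseteq> perp CC T2"
proof
  fix Y0 assume Y0: "Y0 \<in> perp CC T1"
  have claim: "\<forall>Y\<in>perp CC T1. \<forall>i\<ge>1. n + 1 \<le> i + k \<longrightarrow> Ehigh_zero CC i X Y"
    if X: "X \<in> T2" for X k
  proof (induction k)
    case 0
    have "X \<in> Ob CC" "pd_le CC n X" using X tilt_Ob[OF t2] t2 unfolding tilting_def by auto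
    thus ?case using high_vanish[OF ep] by simp
  next
    case (Suc k)
    show ?case
    proof (intro ballI allI impI)
      fix Y i assume Y: "Y \<in> perp CC T1" and i: "1 \<le> i" and ik: "n + 1 \<le> i + Suc k"
      obtain d x y where h: "Real CC d x y" "EC CC d = Y" "Cod CC x \<in> T1" "EA CC d \<in> perp CC T1"
        using t1 Y unfolding tilting_def by blast
      have XO: "X \<in> Ob CC" using X tilt_Ob[OF t2] by auto
      have "Ehigh_zero CC (i + 1) X (EA CC d)" using Suc.IH h(4) i ik by simp
      hence zA: "ext CC ((Omega CC ^^ i) X) (EA CC d) \<subseteq> {EZer CC ((Omega CC ^^ i) X) (EA CC d)}"
        unfolding Ehigh_zero_def by simp
      have ii: "(Omega CC ^^ i) X = Omega CC ((Omega CC ^^ (i - 1)) X)"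
        using i by (cases i) auto
      have "Cod CC x \<in> perp CC T2" using le h(3) by auto
      hence zB: "Ehigh_zero CC i X (Cod CC x)" using X i unfolding perp_def by auto
      show "Ehigh_zero CC i X Y" unfolding Ehigh_zero_def h(2)[symmetric]
        apply (rule shift[OF ep iter_Ob[OF ep XO] h(1)])
        using zB zA ii unfolding Ehigh_zero_def by auto
    qed
  qed
  have "Y0 \<in> Ob CC" using Y0 unfolding perp_def by auto
  moreover have "\<forall>i\<ge>1. \<forall>X\<in>T2. Ehigh_zero CC i X Y0"
    using claim[of _ n] Y0 by auto
  ultimately show "Y0 \<in> perp CC T2" unfolding perp_def by auto
qed

lemma bip_sym: "biproduct CC X Y S i1 i2 p1 p2 \<Longrightarrow> biproduct CC Y X S i2 i1 p2 p1"
proof -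
  assume b: "biproduct CC X Y S i1 i2 p1 p2"
  have h: "i1 \<in> hom CC X S" "i2 \<in> hom CC Y S" "p1 \<in> hom CC S X" "p2 \<in> hom CC S Y"
    using b unfolding biproduct_def by auto
  have "Add CC (Cmp CC i2 p2) (Cmp CC i1 p1) = Add CC (Cmp CC i1 p1) (Cmp CC i2 p2)"
    using add_comm[OF comp[OF h(4) h(2)] comp[OF h(3) h(1)]] .
  thus ?thesis using b unfolding biproduct_def by auto
qed

lemma antisym_tilt:
  assumes ep: "enough_projectives CC" and t1: "tilting CC n T1" and t2: "tilting CC n T2"
    and le1: "T1 \<subseteq> perp CC T2" and le2: "T2 \<subseteq> perp CC T1"
  shows "T1 \<subseteq> T2"
proof
  fix X assume X: "X \<in> T1"
  have XP: "X \<in> perp CC T2" using X le1 by auto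
  obtain d x y where h: "Real CC d x y" "EC CC d = X" "Cod CC x \<in> T2" "EA CC d \<in> perp CC T2"
    using t2 XP unfolding tilting_def by blast
  have "EA CC d \<in> perp CC T1" using perp_mono[OF ep t2 t1 le2] h(4) by auto
  hence "Ehigh_zero CC 1 X (EA CC d)" using X unfolding perp_def by auto
  hence z: "ext CC X (EA CC d) \<subseteq> {EZer CC X (EA CC d)}" unfolding Ehigh_zero_def by simp
  have dE: "d \<in> EE CC" using real_props[OF h(1)] by auto
  have "d \<in> ext CC X (EA CC d)" using extI[OF dE] h(2) by simp
  hence dz: "d = EZer CC X (EA CC d)" using z by auto
  define A where "A = EA CC d"
  have AO: "A \<in> Ob CC" "X \<in> Ob CC" using E1_1 dE h(2) unfolding A_def by auto
  obtain S i1 i2 p1 p2 where bp: "biproduct CC A X S i1 i2 p1 p2" using bip_ex[OF AO] by blast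
  have i1h: "i1 \<in> hom CC A S" using bp unfolding biproduct_def by auto
  have "Real CC d i1 p2" using real_zero[OF AO bp] dz unfolding A_def by simp
  from real_equiv[OF h(1) this] obtain B B' b where
    eq: "x \<in> hom CC (EA CC d) B" "i1 \<in> hom CC (EA CC d) B'" "is_iso CC B B' b"
    unfolding equiv_seq_def by blast
  have BB: "B = Cod CC x" "B' = S" using hom_cod[OF eq(1)] hom_cod[OF eq(2)] hom_cod[OF i1h] by auto
  have "S \<in> T2" using t2 h(3) eq(3) BB unfolding tilting_def subcat_def by blast
  thus "X \<in> T2" using t2 bip_sym[OF bp] unfolding tilting_def summand_closed_def by blast
qed

end

theorem corollary4p14:
  fixes CC :: "('o,'m,'e) extri_data" and n :: nat
  assumes "extriangulated CC" and "krull_schmidt CC"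
    and "enough_projectives CC" and "enough_injectives CC"
  shows "partial_order_on {T. tilting CC n T}
           {(T1, T2). tilting CC n T1 \<and> tilting CC n T2 \<and> T1 \<subseteq> perp CC T2}"
  unfolding partial_order_on_def preorder_on_def refl_on_def trans_def antisym_def
proof (intro conjI allI impI ballI)
  show "{(T1, T2). tilting CC n T1 \<and> tilting CC n T2 \<and> T1 \<subseteq> perp CC T2}
        \<subseteq> {T. tilting CC n T} \<times> {T. tilting CC n T}" by auto
next
  fix T assume "T \<in> {T. tilting CC n T}"
  thus "(T, T) \<in> {(T1, T2). tilting CC n T1 \<and> tilting CC n T2 \<and> T1 \<subseteq> perp CC T2}"
    unfolding tilting_def by auto
next
  fix x y z
  assume a: "(x, y) \<in> {(T1, T2). tilting CC n T1 \<and> tilting CC n T2 \<and> T1 \<subseteq> perp CC T2}"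
    and b: "(y, z) \<in> {(T1, T2). tilting CC n T1 \<and> tilting CC n T2 \<and> T1 \<subseteq> perp CC T2}"
  have "perp CC y \<subseteq> perp CC z" using perp_mono[OF assms(1) assms(3)] b by auto
  thus "(x, z) \<in> {(T1, T2). tilting CC n T1 \<and> tilting CC n T2 \<and> T1 \<subseteq> perp CC T2}"
    using a b by auto
next
  fix x y
  assume a: "(x, y) \<in> {(T1, T2). tilting CC n T1 \<and> tilting CC n T2 \<and> T1 \<subseteq> perp CC T2}"
    and b: "(y, x) \<in> {(T1, T2). tilting CC n T1 \<and> tilting CC n T2 \<and> T1 \<subseteq> perp CC T2}"
  show "x = y" using antisym_tilt[OF assms(1) assms(3)] a b by blast
qed

end
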